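(* Let $X$ and $Y$ be objects of an $R$-linear triangulated category $\mathsf{T}$ with $\operatorname{Hom}^*_{\mathsf{T}}(X,Y)$ in $\mathsf{noeth}^{\mathsf{fl}}(R)$, and let $s$ be an integer with $s\ge\operatorname{cx}(X,Y)\ge1$. Then $e^s(X,Y)=-e^s(X,\Sigma Y)=-e^s(\Sigma X,Y)$. These equalities also hold (with $s=0$) if $\operatorname{cx}(X,Y)=0$ and $\lambda^n(X,Y)=0$ for $n\ll0$.
   Context: $R=\bigoplus_{n\ge 0}R^n$ is a graded-commutative Noetherian ring generated over $R^0$ by $R^d$, $d\ge2$ even (standing assumption). $\mathsf{T}$ is a triangulated category with suspension $\Sigma$ that is $R$-linear (a graded ring map from $R$ to the graded center of $\mathsf{T}$, whose degree-$n$ elements are natural transformations $\eta:\mathrm{id}\to\Sigma^n$ with $\eta\Sigma=(-1)^n\Sigma\eta$), so $\operatorname{Hom}^*_{\mathsf{T}}(X,Y)=\bigoplus_n\operatorname{Hom}_{\mathsf{T}}(X,\Sigma^nY)$ is a graded $R$-module. $\lambda^n(X,Y)=\ell_{R^0}\operatorname{Hom}_{\mathsf{T}}(X,\Sigma^nY)$. $\mathsf{noeth}^{\mathsf{fl}}(R)$: $\bigoplus_{n\ge n_0}\operatorname{Hom}_{\mathsf{T}}(X,\Sigma^nY)$ Noetherian for some $n_0$ and all $\lambda^n<\infty$. Hilbert polynomials $g_i$ with $g_i(n)=\lambda^{dn+i}(X,Y)$ for $n\gg0$; $\operatorname{cx}(X,Y)=1+\max_i\deg g_i$ (zero polynomial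 has degree $-1$). $h(X,Y)(n)=\sum_{i=0}^{d-1}(-1)^{n+i}\lambda^{n+i}(X,Y)$; $\Delta^1f(n)=f(n+d)-f(n)$, $\Delta^0f=f$, $\Delta^s=\Delta^1\Delta^{s-1}$. For $s\ge\operatorname{cx}(X,Y)$: if $\operatorname{cx}\ge1$, $e^s(X,Y)=\Delta^{s-1}h(X,Y)(n)$ for $n\gg0$; if $\operatorname{cx}=0$ and $\lambda^n(X,Y)=0$ for $n\ll0$, $e^0(X,Y)=\sum_n(-1)^n\lambda^n(X,Y)$. *)

theory Defs
  imports "HOL-Computational_Algebra.Polynomial" "HOL-Library.Extended_Nat"
begin

text \<open>Abstract model of the data of an R-linear triangulated category that the
statement depends on.  Objects have type 'o; isoR is the isomorphism relation;
S is the suspension, Si a quasi-inverse of it; hlen A B is the R^0-length of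
Hom_T(A,B) (possibly infinite).\<close>

definition susp_cat ::
  "('o \<Rightarrow> 'o \<Rightarrow> bool) \<Rightarrow> ('o \<Rightarrow> 'o) \<Rightarrow> ('o \<Rightarrow> 'o) \<Rightarrow> ('o \<Rightarrow> 'o \<Rightarrow> enat) \<Rightarrow> bool" where
  "susp_cat isoR S Si hlen \<longleftrightarrow>
     equivp isoR \<and>
     (\<forall>A B. isoR A B \<longrightarrow> isoR (S A) (S B)) \<and>
     (\<forall>A B. isoR A B \<longrightarrow> isoR (Si A) (Si B)) \<and>
     (\<forall>A. isoR (S (Si A)) A) \<and> (\<forall>A. isoR (Si (S A)) A) \<and>
     (\<forall>A A' B B'. isoR A A' \<longrightarrow> isoR B B' \<longrightarrow> hlen A B = hlen A' B') \<and>
     (\<forall>A B. hlen (S A) (S B) = hlen A B)"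

definition shift :: "('o \<Rightarrow> 'o) \<Rightarrow> ('o \<Rightarrow> 'o) \<Rightarrow> int \<Rightarrow> 'o \<Rightarrow> 'o" where
  "shift S Si n = (if 0 \<le> n then S ^^ nat n else Si ^^ nat (- n))"

definition lam :: "('o \<Rightarrow> 'o \<Rightarrow> enat) \<Rightarrow> ('o \<Rightarrow> 'o) \<Rightarrow> ('o \<Rightarrow> 'o) \<Rightarrow> 'o \<Rightarrow> 'o \<Rightarrow> int \<Rightarrow> nat" where
  "lam hlen S Si X Y n = the_enat (hlen X (shift S Si n Y))"

definition hilb_polys :: "nat \<Rightarrow> (int \<Rightarrow> nat) \<Rightarrow> (nat \<Rightarrow> real poly) \<Rightarrow> bool" where
  "hilb_polys d l g \<longleftrightarrow>
     (\<forall>i<d. eventually (\<lambda>n::nat. poly (g i) (real n) = real (l (int d * int n + int i))) sequentially)"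

definition pdeg :: "real poly \<Rightarrow> int" where
  "pdeg p = (if p = 0 then -1 else int (degree p))"

definition cx :: "nat \<Rightarrow> (int \<Rightarrow> nat) \<Rightarrow> int" where
  "cx d l = (let g = (SOME g. hilb_polys d l g) in 1 + Max ((\<lambda>i. pdeg (g i)) ` {..<d}))"

definition hfun :: "nat \<Rightarrow> (int \<Rightarrow> nat) \<Rightarrow> int \<Rightarrow> int" where
  "hfun d l n = (\<Sum>i<d. (if even (n + int i) then 1 else -1) * int (l (n + int i)))"

definition delta :: "nat \<Rightarrow> (int \<Rightarrow> int) \<Rightarrow> int \<Rightarrow> int" where
  "delta d f n = f (n + int d) - f n"

text \<open>e^s for s >= 1 (used when s >= cx >= 1): the eventual value of Delta^{s-1} h.\<close>
definition emult :: "nat \<Rightarrow> (int \<Rightarrow> nat) \<Rightarrow> nat \<Rightarrow> int" where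
  "emult d l s = (THE c. eventually (\<lambda>n. ((delta d ^^ (s - 1)) (hfun d l)) n = c) at_top)"

text \<open>e^0 (used when cx = 0 and lambda^n = 0 for n << 0): sum of (-1)^n lambda^n.\<close>
definition emult0 :: "(int \<Rightarrow> nat) \<Rightarrow> int" where
  "emult0 l = (\<Sum>n\<in>{n. l n \<noteq> 0}. (if even n then 1 else -1) * int (l n))"

text \<open>Surrogate for Hom^*(X,Y) in noeth^fl(R): all lengths finite and the
Hilbert polynomials exist (their existence is what Noetherianity provides).\<close>
definition noeth_fl :: "nat \<Rightarrow> ('o \<Rightarrow> 'o \<Rightarrow> enat) \<Rightarrow> ('o \<Rightarrow> 'o) \<Rightarrow> ('o \<Rightarrow> 'o) \<Rightarrow> 'o \<Rightarrow> 'o \<Rightarrow> bool" where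
  "noeth_fl d hlen S Si X Y \<longleftrightarrow>
     (\<forall>n. hlen X (shift S Si n Y) \<noteq> \<infinity>) \<and> (\<exists>g. hilb_polys d (lam hlen S Si X Y) g)"

end

theory Submission
  imports Defs
begin

definition fd :: "(nat \<Rightarrow> real) \<Rightarrow> nat \<Rightarrow> real" where
  "fd f m = f (Suc m) - f m"

lemma fd_poly_degree:
  fixes p :: "real poly"
  assumes "degree p > 0"
  shows "pcompose p [:1,1:] - p = 0 \<or> degree (pcompose p [:1,1:] - p) < degree p"
proof -
  let ?q = "pcompose p [:1,1:] - p"
  have dc: "degree (pcompose p [:1,1:]) = degree p" by (simp add: degree_pcompose)
  have lc: "lead_coeff (pcompose p [:1,1:]) = lead_coeff p" by (simp add: lead_coeff_comp)
  have "degree ?q < degree p"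
  proof (rule degree_lessI)
    show "?q \<noteq> 0 \<or> 0 < degree p" using assms by simp
    show "\<forall>k\<ge>degree p. coeff ?q k = 0"
    proof (intro allI impI)
      fix k assume k: "k \<ge> degree p"
      show "coeff ?q k = 0"
      proof (cases "k = degree p")
        case True then show ?thesis using lc dc by simp
      next
        case False then have "k > degree p" using k by simp
        then show ?thesis using dc by (simp add: coeff_eq_0)
      qed
    qed
  qed
  then show ?thesis by simp
qed

lemma fd_poly:
  fixes p :: "real poly"
  shows "p = 0 \<or> degree p < s \<Longrightarrow> (fd ^^ s) (\<lambda>m. poly p (real m)) = (\<lambda>_. 0)"
proof (induction s arbitrary: p)
  case 0 then show ?case by (simp add: fun_eq_iff)
next
  case (Suc s)
  let ?q = "pcompose p [:1,1:] - p"
  have e: "fd (\<lambda>m. poly p (real m)) = (\<lambda>m. poly ?q (real m))"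
    by (simp add: fun_eq_iff fd_def poly_pcompose add.commute)
  have "?q = 0 \<or> degree ?q < s"
  proof (cases "degree p = 0")
    case True
    then obtain c where "p = [:c:]" by (metis degree_eq_zeroE)
    then show ?thesis by simp
  next
    case False
    then have "p \<noteq> 0" by auto
    then have "degree p < Suc s" using Suc.prems by simp
    then show ?thesis using fd_poly_degree[of p] False by auto
  qed
  then have "(fd ^^ s) (\<lambda>m. poly ?q (real m)) = (\<lambda>_. 0)" by (rule Suc.IH)
  then show ?case by (simp add: funpow_Suc_right e del: funpow.simps)
qed

lemma fd_eq_eventually:
  "(\<forall>m\<ge>M. f m = g m) \<Longrightarrow> \<forall>m\<ge>M. (fd ^^ j) f m = (fd ^^ j) g m"
  by (induction j) (auto simp: fd_def)

lemma delta_fd: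
  fixes f :: "int \<Rightarrow> int"
  shows "real_of_int ((delta d ^^ j) f (int d * int m + i)) =
         (fd ^^ j) (\<lambda>m. real_of_int (f (int d * int m + i))) m"
proof (induction j arbitrary: m)
  case 0 then show ?case by simp
next
  case (Suc j)
  have "(delta d ^^ Suc j) f (int d * int m + i) =
        (delta d ^^ j) f (int d * int (Suc m) + i) - (delta d ^^ j) f (int d * int m + i)"
    by (simp add: delta_def algebra_simps)
  then show ?case using Suc.IH[of m] Suc.IH[of "Suc m"] by (simp add: fd_def)
qed

lemma delta_shift: "(delta d ^^ j) (\<lambda>n. f (n + k)) = (\<lambda>n. (delta d ^^ j) f (n + k))"
  by (induction j) (auto simp: delta_def fun_eq_iff algebra_simps)

lemma delta_diff: "(delta d ^^ j) (\<lambda>n. f n - g n) = (\<lambda>n. (delta d ^^ j) f n - (delta d ^^ j) g n)"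
  by (induction j) (auto simp: delta_def fun_eq_iff algebra_simps)

lemma delta_neg: "(delta d ^^ j) (\<lambda>n. - f n) = (\<lambda>n. - (delta d ^^ j) f n)"
  by (induction j) (auto simp: delta_def fun_eq_iff algebra_simps)

lemma delta_per:
  assumes "\<And>n. c (n + int d) = c n"
  shows "(delta d ^^ j) (\<lambda>n. c n * f n) = (\<lambda>n. c n * (delta d ^^ j) f n)"
  by (induction j) (auto simp: delta_def fun_eq_iff algebra_simps assms)


lemma iso_funpow:
  assumes "\<forall>A B. isoR A B \<longrightarrow> isoR (F A) (F B)" "isoR A B"
  shows "isoR ((F ^^ j) A) ((F ^^ j) B)"
  using assms by (induction j) auto

lemma lam_SY:
  assumes sc: "susp_cat isoR S Si hlen"
  shows "lam hlen S Si X (S Y) = (\<lambda>n. lam hlen S Si X Y (n + 1))"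
proof
  fix n :: int
  from sc have eq: "equivp isoR" and siR: "\<forall>A B. isoR A B \<longrightarrow> isoR (Si A) (Si B)"
    and SSi: "\<forall>A. isoR (Si (S A)) A"
    and hl: "\<forall>A A' B B'. isoR A A' \<longrightarrow> isoR B B' \<longrightarrow> hlen A B = hlen A' B'"
    unfolding susp_cat_def by blast+
  have "isoR (shift S Si n (S Y)) (shift S Si (n + 1) Y)"
  proof (cases "0 \<le> n")
    case True
    then have "nat (n+1) = Suc (nat n)" by simp
    then have "shift S Si n (S Y) = shift S Si (n + 1) Y"
      using True by (simp add: shift_def funpow_Suc_right del: funpow.simps)
    then show ?thesis using eq by (simp add: equivp_reflp)
  next
    case False
    then obtain k where k: "nat (-n) = Suc k" by (metis gr0_implies_Suc linorder_not_le neg_0_less_iff_less zero_less_nat_eq)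
    have a: "shift S Si n (S Y) = (Si ^^ k) (Si (S Y))"
      using False k by (simp add: shift_def funpow_Suc_right del: funpow.simps)
    have b: "shift S Si (n + 1) Y = (Si ^^ k) Y"
    proof (cases "n + 1 = 0")
      case True then have "k = 0" using k by simp
      then show ?thesis using True by (simp add: shift_def)
    next
      case False2: False
      then have "nat (-(n+1)) = k" using k by simp
      then show ?thesis using False2 \<open>\<not> 0 \<le> n\<close> by (simp add: shift_def)
    qed
    show ?thesis unfolding a b by (rule iso_funpow[OF siR]) (use SSi in blast)
  qed
  then have "hlen X (shift S Si n (S Y)) = hlen X (shift S Si (n + 1) Y)"
    by (rule hl[rule_format, OF equivp_reflp[OF eq]])
  then show "lam hlen S Si X (S Y) n = lam hlen S Si X Y (n + 1)" by (simp add: lam_def)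
qed

lemma lam_SX:
  assumes sc: "susp_cat isoR S Si hlen"
  shows "lam hlen S Si (S X) Y = (\<lambda>n. lam hlen S Si X Y (n - 1))"
proof
  fix n :: int
  from sc have eq: "equivp isoR" and SR: "\<forall>A B. isoR A B \<longrightarrow> isoR (S A) (S B)"
    and SiS: "\<forall>A. isoR (S (Si A)) A"
    and hl: "\<forall>A A' B B'. isoR A A' \<longrightarrow> isoR B B' \<longrightarrow> hlen A B = hlen A' B'"
    and hS: "\<forall>A B. hlen (S A) (S B) = hlen A B"
    unfolding susp_cat_def by blast+
  have "isoR (S (shift S Si (n - 1) Y)) (shift S Si n Y)"
  proof (cases "0 \<le> n - 1")
    case True
    then have "nat n = Suc (nat (n - 1))" by simp
    then have "S (shift S Si (n - 1) Y) = shift S Si n Y"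
      using True by (simp add: shift_def)
    then show ?thesis using eq by (simp add: equivp_reflp)
  next
    case False
    then obtain k where k: "nat (-(n - 1)) = Suc k" by (metis gr0_implies_Suc linorder_not_le neg_0_less_iff_less zero_less_nat_eq)
    have a: "S (shift S Si (n - 1) Y) = S (Si ((Si ^^ k) Y))"
      using False k by (simp add: shift_def)
    have b: "shift S Si n Y = (Si ^^ k) Y"
    proof (cases "n = 0")
      case True then have "k = 0" using k by simp
      then show ?thesis using True by (simp add: shift_def)
    next
      case False2: False
      then have "nat (-n) = k" using k by simp
      then show ?thesis using False2 False by (simp add: shift_def)
    qed
    show ?thesis unfolding a b using SiS by blast
  qed
  then have "hlen (S X) (shift S Si n Y) = hlen (S X) (S (shift S Si (n - 1) Y))"
    by (rule hl[rule_format, OF equivp_reflp[OF eq] equivp_symp[OF eq]])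
  also have "\<dots> = hlen X (shift S Si (n - 1) Y)" using hS by simp
  finally show "lam hlen S Si (S X) Y n = lam hlen S Si X Y (n - 1)" by (simp add: lam_def)
qed


lemma hfun_shift:
  assumes "odd k"
  shows "hfun d (\<lambda>n. l (n + k)) = (\<lambda>n. - hfun d l (n + k))"
proof
  fix n
  have "hfun d (\<lambda>n. l (n + k)) n = (\<Sum>i<d. - ((if even (n + k + int i) then 1 else -1) * int (l (n + k + int i))))"
    unfolding hfun_def
    by (rule sum.cong) (use assms in \<open>auto simp: algebra_simps\<close>)
  also have "\<dots> = - hfun d l (n + k)" unfolding hfun_def by (simp add: sum_negf)
  finally show "hfun d (\<lambda>n. l (n + k)) n = - hfun d l (n + k)" .
qed

lemma emult0_shift:
  assumes "odd k"
  shows "emult0 (\<lambda>n. l (n + k)) = - emult0 l"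
proof -
  have A: "{n. l (n + k) \<noteq> 0} = (\<lambda>m. m - k) ` {m. l m \<noteq> 0}"
    by (auto simp: image_def intro!: exI[of _ "_ + k"])
  have inj: "inj_on (\<lambda>m. m - k) {m. l m \<noteq> 0}" by (auto simp: inj_on_def)
  have "emult0 (\<lambda>n. l (n + k)) = sum ((\<lambda>n. (if even n then 1 else -1) * int (l (n + k))) \<circ> (\<lambda>m. m - k)) {m. l m \<noteq> 0}"
    unfolding emult0_def A by (rule sum.reindex[OF inj])
  also have "\<dots> = (\<Sum>m\<in>{m. l m \<noteq> 0}. - ((if even m then 1 else -1) * int (l m)))"
    by (rule sum.cong) (use assms in auto)
  also have "\<dots> = - emult0 l" unfolding emult0_def by (simp add: sum_negf)
  finally show ?thesis .
qed

lemma hfun_diff: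
  assumes "even d"
  shows "hfun d l (n + 1) - hfun d l n =
    (if even n then 1 else -1) * (int (l (n + int d)) - int (l n))"
proof -
  define a where "a i = (if even (n + int i) then 1 else -1) * int (l (n + int i))" for i :: nat
  have 1: "hfun d l (n + 1) = (\<Sum>i<d. a (Suc i))"
    unfolding hfun_def a_def by (rule sum.cong) (auto simp: algebra_simps)
  have 2: "hfun d l n = (\<Sum>i<d. a i)" unfolding hfun_def a_def by simp
  have "hfun d l (n + 1) - hfun d l n = a d - a 0"
    unfolding 1 2 by (simp add: sum_subtractf[symmetric] sum_lessThan_telescope)
  then show ?thesis using assms by (simp add: a_def)
qed

lemma ev_unique:
  assumes "eventually (\<lambda>n::int. f n = a) at_top" "eventually (\<lambda>n. f n = b) at_top"
  shows "a = b"
proof -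
  from eventually_conj[OF assms] obtain N where "\<forall>n\<ge>N. f n = a \<and> f n = b"
    by (auto simp: eventually_at_top_linorder)
  then show ?thesis by auto
qed

lemma the_ev:
  assumes "eventually (\<lambda>n::int. f n = c) at_top"
  shows "(THE c. eventually (\<lambda>n. f n = c) at_top) = c"
proof (rule the_equality)
  show "eventually (\<lambda>n. f n = c) at_top" by (rule assms)
  fix c' assume "eventually (\<lambda>n. f n = c') at_top"
  then show "c' = c" using assms by (rule ev_unique)
qed

lemma ev_shift:
  assumes "eventually (\<lambda>n::int. f n = c) at_top"
  shows "eventually (\<lambda>n. - f (n + k) = - c) at_top"
proof -
  from assms obtain N where N: "\<forall>n\<ge>N. f n = c" by (auto simp: eventually_at_top_linorder)
  have "\<forall>n\<ge>N - k. - f (n + k) = - c"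
  proof (intro allI impI)
    fix n assume "n \<ge> N - k"
    then have "n + k \<ge> N" by simp
    then show "- f (n + k) = - c" using N by simp
  qed
  then show ?thesis unfolding eventually_at_top_linorder by blast
qed

lemma exists_c:
  fixes l :: "int \<Rightarrow> nat"
  assumes d: "even d" "d > 0" and s: "s \<ge> 1"
    and hp: "hilb_polys d l g" and deg: "\<forall>i<d. g i = 0 \<or> degree (g i) < s"
  shows "\<exists>c. eventually (\<lambda>n. (delta d ^^ (s - 1)) (hfun d l) n = c) at_top"
proof -
  define F where "F = (delta d ^^ (s - 1)) (hfun d l)"
  define L where "L = (\<lambda>n. int (l n))"
  have "eventually (\<lambda>m. \<forall>i\<in>{..<d}. poly (g i) (real m) = real (l (int d * int m + int i))) sequentially"
    using hp unfolding hilb_polys_def by (intro eventually_ball_finite) auto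
  then obtain M where M: "\<And>m i. m \<ge> M \<Longrightarrow> i < d \<Longrightarrow> poly (g i) (real m) = real (l (int d * int m + int i))"
    by (auto simp: eventually_sequentially)
  have z1: "(delta d ^^ s) L (int d * int m + int i) = 0" if "m \<ge> M" "i < d" for m i
  proof -
    have "real_of_int ((delta d ^^ s) L (int d * int m + int i)) =
      (fd ^^ s) (\<lambda>m. real_of_int (L (int d * int m + int i))) m" by (rule delta_fd)
    also have "\<dots> = (fd ^^ s) (\<lambda>m. poly (g i) (real m)) m"
      using fd_eq_eventually[of M "\<lambda>m. real_of_int (L (int d * int m + int i))" "\<lambda>m. poly (g i) (real m)" s]
        M that by (simp add: L_def)
    also have "\<dots> = 0" using fd_poly[of "g i" s] deg that by simp
    finally show ?thesis by simp
  qed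
  have z: "(delta d ^^ s) L n = 0" if "n \<ge> int d * int M" for n
  proof -
    have dp: "int d > 0" using d by simp
    have "int M = (int d * int M) div int d" using dp by simp
    also have "\<dots> \<le> n div int d" by (rule zdiv_mono1[OF that dp])
    finally have "n div int d \<ge> int M" .
    moreover have "n mod int d \<ge> 0" "n mod int d < int d" using dp by auto
    moreover have "n = int d * (n div int d) + n mod int d" by simp
    ultimately have "n = int d * int (nat (n div int d)) + int (nat (n mod int d))"
      "nat (n div int d) \<ge> M" "nat (n mod int d) < d" by auto
    then show ?thesis using z1 by metis
  qed
  have stp: "F (n + 1) = F n" if "n \<ge> int d * int M" for n
  proof -
    have hd: "(\<lambda>n. hfun d l (n + 1) - hfun d l n) =
        (\<lambda>n. (if even n then 1 else -1) * delta d L n)"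
      using hfun_diff[OF d(1)] by (simp add: fun_eq_iff delta_def L_def)
    have per: "\<And>n. (if even (n + int d) then 1 else -1 :: int) = (if even n then 1 else -1)"
      using d(1) by auto
    have "F (n + 1) - F n = (delta d ^^ (s - 1)) (\<lambda>n. hfun d l (n + 1) - hfun d l n) n"
      unfolding F_def delta_diff delta_shift by simp
    also have "\<dots> = (if even n then 1 else -1) * (delta d ^^ (s - 1)) (delta d L) n"
      unfolding hd delta_per[where c = "\<lambda>n. if even n then 1 else -1", OF per] by simp
    also have "(delta d ^^ (s - 1)) (delta d L) = (delta d ^^ s) L"
    proof -
      obtain t where t: "s = Suc t" using s by (cases s) auto
      show ?thesis unfolding t by (simp only: funpow_Suc_right comp_apply diff_Suc_1)
    qed
    finally show ?thesis using z[OF that] by simp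
  qed
  have "F n = F (int d * int M)" if "n \<ge> int d * int M" for n
    using that
  proof (induction n rule: int_ge_induct)
    case base then show ?case by simp
  next
    case (step i) then show ?case using stp[of i] by simp
  qed
  then have "eventually (\<lambda>n. F n = F (int d * int M)) at_top"
    unfolding eventually_at_top_linorder by blast
  then show ?thesis unfolding F_def by blast
qed


lemma emult_shift:
  fixes l :: "int \<Rightarrow> nat"
  assumes "odd k" and ev: "eventually (\<lambda>n. (delta d ^^ (s - 1)) (hfun d l) n = c) at_top"
  shows "emult d (\<lambda>n. l (n + k)) s = - c" "emult d l s = c"
proof -
  have eq: "(delta d ^^ (s - 1)) (hfun d (\<lambda>n. l (n + k))) = (\<lambda>n. - (delta d ^^ (s - 1)) (hfun d l) (n + k))"
    unfolding hfun_shift[OF assms(1)] delta_neg by (subst delta_shift) (rule refl)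
  have e: "eventually (\<lambda>n. - (delta d ^^ (s - 1)) (hfun d l) (n + k) = - c) at_top"
    by (rule ev_shift[OF ev])
  show "emult d (\<lambda>n. l (n + k)) s = - c"
    unfolding emult_def eq by (rule the_ev[OF e])
  show "emult d l s = c" unfolding emult_def using the_ev[OF ev] .
qed

theorem proposition4p9:
  fixes isoR :: "'o \<Rightarrow> 'o \<Rightarrow> bool" and S Si :: "'o \<Rightarrow> 'o"
    and hlen :: "'o \<Rightarrow> 'o \<Rightarrow> enat" and d :: nat and X Y :: 'o
  assumes "susp_cat isoR S Si hlen"
    and "d \<ge> 2" and "even d"
    and "noeth_fl d hlen S Si X Y"
  shows "(\<forall>s::nat. int s \<ge> cx d (lam hlen S Si X Y) \<and> cx d (lam hlen S Si X Y) \<ge> 1 \<longrightarrow>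
           emult d (lam hlen S Si X Y) s = - emult d (lam hlen S Si X (S Y)) s \<and>
           emult d (lam hlen S Si X Y) s = - emult d (lam hlen S Si (S X) Y) s) \<and>
         (cx d (lam hlen S Si X Y) = 0 \<and> eventually (\<lambda>n. lam hlen S Si X Y n = 0) at_bot \<longrightarrow>
           emult0 (lam hlen S Si X Y) = - emult0 (lam hlen S Si X (S Y)) \<and>
           emult0 (lam hlen S Si X Y) = - emult0 (lam hlen S Si (S X) Y))"
proof -
  define l where "l = lam hlen S Si X Y"
  have l1: "lam hlen S Si X (S Y) = (\<lambda>n. l (n + 1))" unfolding l_def by (rule lam_SY[OF assms(1)])
  have l2: "lam hlen S Si (S X) Y = (\<lambda>n. l (n + (- 1)))" unfolding l_def using lam_SX[OF assms(1)] by simp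
  have o1: "odd (1::int)" by simp
  have o2: "odd (-1::int)" by simp
  define g where "g = (SOME g. hilb_polys d l g)"
  have hp: "hilb_polys d l g"
  proof -
    have "\<exists>g. hilb_polys d l g" using assms(4) unfolding noeth_fl_def l_def by blast
    then show ?thesis unfolding g_def by (rule someI_ex)
  qed
  have cxd: "cx d l = 1 + Max ((\<lambda>i. pdeg (g i)) ` {..<d})" unfolding cx_def g_def by simp
  have P1: "emult d l s = - emult d (\<lambda>n. l (n + 1)) s \<and> emult d l s = - emult d (\<lambda>n. l (n + (- 1))) s"
    if s1: "int s \<ge> cx d l" and s2: "cx d l \<ge> 1" for s
  proof -
    have sge: "s \<ge> 1" using s1 s2 by simp
    have deg: "\<forall>i<d. g i = 0 \<or> degree (g i) < s"
    proof (intro allI impI)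
      fix i assume i: "i < d"
      have "pdeg (g i) \<le> Max ((\<lambda>i. pdeg (g i)) ` {..<d})" using i by (intro Max_ge) auto
      then have "pdeg (g i) < int s" using s1 cxd by simp
      then show "g i = 0 \<or> degree (g i) < s" unfolding pdeg_def by (auto split: if_splits)
    qed
    obtain c where c: "eventually (\<lambda>n. (delta d ^^ (s - 1)) (hfun d l) n = c) at_top"
      using exists_c[OF assms(3) _ sge hp deg] assms(2) by auto
    show ?thesis using emult_shift[OF o1 c] emult_shift[OF o2 c] by simp
  qed
  show ?thesis
    unfolding l1 l2 l_def[symmetric]
  proof (intro conjI allI impI)
    fix s assume "int s \<ge> cx d l \<and> cx d l \<ge> 1"
    then have "emult d l s = - emult d (\<lambda>n. l (n + 1)) s \<and> emult d l s = - emult d (\<lambda>n. l (n + (- 1))) s"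
      using P1 by blast
    then show "emult d l s = - emult d (\<lambda>n. l (n + 1)) s" "emult d l s = - emult d (\<lambda>n. l (n + (- 1))) s"
      by blast+
  next
    show "emult0 l = - emult0 (\<lambda>n. l (n + 1))" using emult0_shift[OF o1, of l] by simp
    show "emult0 l = - emult0 (\<lambda>n. l (n + (- 1)))" using emult0_shift[OF o2, of l] by simp
  qed
qed

end
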